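(* Let $\overline{D}$ be FG declarations and $\sigma_m$ a TL method substitution. Suppose $\overline{D}\vdash t\triangleright u\leadsto E_1$, $\overline{D}\approx_k\sigma_m$, and $\models_k t: e\approx E_2$. Then $\models_k u: e.(u)\approx E_1\,E_2$.
   Context: Featherweight Go (FG). Field names $f$, method names $m$, variables $x$, structure type names $t_S,u_S$, interface type names $t_I,u_I$; types $t,u$ range over both kinds of names. A method signature is $M = (x_1\,t_1,\ldots,x_n\,t_n)\,t$; a method specification is $m M$. Expressions: $e ::= x \mid e.m(e_1,\ldots,e_n) \mid t_S\{e_1,\ldots,e_n\} \mid e.f \mid e.(t)$. Declarations: $\mathtt{type}\ t_S\ \mathtt{struct}\{f_1\,t_1 \ldots f_n\,t_n\}$, $\mathtt{type}\ t_I\ \mathtt{interface}\{S_1 \ldots S_q\}$ ($S_j$ method specifications, in this order), and method declarations $\mathtt{func}\ (x\ t_S)\ m M\ \{\mathtt{return}\ e\}$. It is assumed that structures are non-recursive, field names within a struct are distinct, method names within an interface are distinct, and each method declaration is uniquely identified by receiver type and method name. $\mathrm{methods}(\overline{D},t_S)=\{mM \mid \mathtt{func}\ (x\ t_S)\ mM\{\ldots\}\in\overline{D}\}$; $\mathrm{methods}(\overline{D},t_I)$ is the set of specifications of the declaration of $t_I$. Subtyping: $t_S <: t_S$, and $t <: u_I$ iff $\mathrm{methods}(\overline{D},t)\supseteq\mathrm{methods}(\overline{D},u_I)$. $\mathrm{methodLookup}(\overline{D},(m,t_S))$ is the unique declaration $\mathtt{func}\ (x\ t_S)\ mM\{\ldots\}\in\overline{D}$.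 FG values $v ::= t_S\{v_1,\ldots,v_n\}$. Reduction $\overline{D}\vdash d\longrightarrow e$ is closed under evaluation contexts $\mathcal{E} ::= [\,] \mid t_S\{\overline{v},\mathcal{E},\overline{e}\} \mid \mathcal{E}.f \mid \mathcal{E}.(t) \mid \mathcal{E}.m(\overline{e}) \mid v.m(\overline{v},\mathcal{E},\overline{e})$, with rules $t_S\{v_1..v_n\}.f_i \longrightarrow v_i$; $v.m(v_1..v_n)\longrightarrow [x\mapsto v, x_i\mapsto v_i]e$ if $v=t_S\{\ldots\}$ and $\mathtt{func}\ (x\ t_S)\ m(x_1\,t_1..x_n\,t_n)\,t\{\mathtt{return}\ e\}\in\overline{D}$; $v.(t)\longrightarrow v$ if $v=t_S\{\ldots\}$ and $t_S<:t$. $\overline{D}\vdash e\longrightarrow^{\le k} v$ means $e$ reduces to value $v$ in at most $k$ steps. Target language (TL): $E ::= X \mid K \mid E\,E \mid \lambda X.E \mid \mathtt{case}\ E\ \mathtt{of}\ [Pat_1\to E_1,\ldots]$, $Pat ::= K\,X_1\ldots X_n$, with tuple constructors $(E_1,\ldots,E_n)$; nested patterns abbreviate nested case expressions. TL values $V ::= X \mid K\,V_1\ldots V_n$. Given a method substitution $\sigma_m$ (finite map from variables $Y$ to $\lambda$-abstractions), reduction $\sigma_m\vdash E\longrightarrow E'$ is closed under contexts $R ::= [\,]\mid K\,\overline{V}\,R\,\overline{E}\mid \mathtt{case}\ R\ \mathtt{of}\ [\ldots]\mid R\,E\mid V\,R$ with rules $(\lambda X.E)\,V\longrightarrow[X\mapsto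 V]E$; $\mathtt{case}\ K\,V_1..V_n\ \mathtt{of}\ [\ldots]\longrightarrow[X_i\mapsto V_i]E'$ if $K\,X_1..X_n\to E'$ is a clause; $Y\,E\longrightarrow\sigma_m(Y)\,E$. $\sigma_m\vdash E\longrightarrow^{\le k}V$ analogously. Each struct $t_S$ has a TL constructor $K_{t_S}$, each interface $t_I$ a constructor $K_{t_I}$; the method declaration of $m$ for receiver $t_S$ has a TL variable $m_{t_S}$. Interface-value construction $\overline{D}\vdash t<:u_I\leadsto E$: if $\mathtt{type}\ t_I\ \mathtt{interface}\{m_1M_1..m_nM_n\}\in\overline{D}$ and $\mathrm{methods}(\overline{D},t_S)\supseteq\{m_iM_i\}$ then $\overline{D}\vdash t_S<:t_I\leadsto\lambda X.K_{t_I}(X,m_{1,t_S},\ldots,m_{n,t_S})$; if $\mathtt{type}\ t_I\ \mathtt{interface}\{R_1..R_n\}$, $\mathtt{type}\ u_I\ \mathtt{interface}\{S_1..S_q\}\in\overline{D}$ and $\pi:\{1..q\}\to\{1..n\}$ with $S_i=R_{\pi(i)}$, then $\overline{D}\vdash t_I<:u_I\leadsto\lambda X.\mathtt{case}\ X\ \mathtt{of}\ K_{t_I}(X,X_1,..,X_n)\to K_{u_I}(X,X_{\pi(1)},..,X_{\pi(q)})$. Interface-value destruction $\overline{D}\vdash t_I\triangleright u\leadsto E$: if $\mathtt{type}\ t_I\ \mathtt{interface}\{R_1..R_n\}\in\overline{D}$ and $t_S<:t_I$ then $\overline{D}\vdash t_I\triangleright t_S\leadsto\lambda X.\mathtt{case}\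 X\ \mathtt{of}\ K_{t_I}(K_{t_S}\,Y,X_1,..,X_n)\to K_{t_S}\,Y$; and $\overline{D}\vdash t_I\triangleright u_I\leadsto\lambda X.\mathtt{case}\ X\ \mathtt{of}\ K_{t_I}(Y,X_1,..,X_n)\to\mathtt{case}\ Y\ \mathtt{of}\ [Cls_1,\ldots]$, where for each struct declaration $t_{Sj}$ in $\overline{D}$ with $\overline{D}\vdash t_{Sj}<:u_I\leadsto E_j$ there is a clause $Cls_j = K_{t_{Sj}}\,Y'\to E_j\,(K_{t_{Sj}}\,Y')$. Step-indexed logical relation (relative to fixed $\overline{D}$ and $\sigma_m$), defined by the rules: (Exp) $\models_k t: e\approx E$ holds if for all $k_1<k$, $k_2<k$, FG values $v$ and TL values $V$ with $k-k_1-k_2>0$, $\overline{D}\vdash e\longrightarrow^{\le k_1}v$ and $\sigma_m\vdash E\longrightarrow^{\le k_2}V$, we have $\models_{k-k_1-k_2} t: v\approx V$. (Struct) $\models_k t_S: t_S\{v_1..v_n\}\approx K_{t_S}(V_1,..,V_n)$ holds if $\mathtt{type}\ t_S\ \mathtt{struct}\{f_1t_1..f_nt_n\}\in\overline{D}$ and $\models_k t_i: v_i\approx V_i$ for all $i$. (Iface) $\models_k t_I: v\approx K_{t_I}(V,V_1,..,V_n)$ holds if $V=K_{u_S}\,\overline{V'}$ for some struct $u_S$, $\models_{k_1}u_S: v\approx V$ for all $k_1<k$, $\mathrm{methods}(\overline{D},t_I)=\{m_1M_1,..,m_nM_n\}$ (in declaration order), and for all $k_2<k$ and $i$, $\models_{k_2}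 m_iM_i:\mathrm{methodLookup}(\overline{D},(m_i,u_S))\approx V_i$. (Method) $\models_k m(x_1t_1..x_nt_n)t:\mathtt{func}\ (x\ t_S)\ m(x_1t_1..x_nt_n)t\{\mathtt{return}\ e\}\approx V$ holds if for all $k'\le k$ and $v',V',v_i,V_i$ with $\models_{k'}t_S:v'\approx V'$ and $\models_{k'}t_i:v_i\approx V_i$ for all $i$, we have $\models_{k'}t:[x\mapsto v',x_i\mapsto v_i]e\approx(V\,V')\,(V_1,..,V_n)$. (Decls) $\overline{D}\approx_k\sigma_m$ iff for every $\mathtt{func}\ (x\ t_S)\ mM\{\mathtt{return}\ e\}\in\overline{D}$, $\models_k mM:\mathtt{func}\ (x\ t_S)\ mM\{\mathtt{return}\ e\}\approx m_{t_S}$ (the TL variable). *)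

theory Defs
  imports Main
begin

section \<open>Featherweight Go (FG)\<close>

type_synonym name = string

datatype ty = TS name | TI name

datatype msig = Sig "(name \<times> ty) list" ty

type_synonym mspec = "name \<times> msig"

datatype fexp =
    FVar name
  | FCall fexp name "fexp list"
  | FLit name "fexp list"
  | FSel fexp name
  | FAssert fexp ty

datatype decl =
    DStruct name "(name \<times> ty) list"
  | DIface name "mspec list"
  | DMeth name name name msig fexp            (* func (x tS) m M {return e}: DMeth x tS m M e *)

type_synonym decls = "decl list"

definition struct_graph :: "decls \<Rightarrow> (name \<times> name) set" where
  "struct_graph D = {(s, s'). \<exists>fs f. DStruct s fs \<in> set D \<and> (f, TS s') \<in> set fs}"

definition wf_decls :: "decls \<Rightarrow> bool" where
  "wf_decls D \<longleftrightarrow>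
     acyclic (struct_graph D)
   \<and> (\<forall>s fs. DStruct s fs \<in> set D \<longrightarrow> distinct (map fst fs))
   \<and> (\<forall>i Ss. DIface i Ss \<in> set D \<longrightarrow> distinct (map fst Ss))
   \<and> (\<forall>x x' s m M M' e e'. DMeth x s m M e \<in> set D \<longrightarrow> DMeth x' s m M' e' \<in> set D
        \<longrightarrow> x = x' \<and> M = M' \<and> e = e')
   \<and> (\<forall>s fs fs'. DStruct s fs \<in> set D \<longrightarrow> DStruct s fs' \<in> set D \<longrightarrow> fs = fs')
   \<and> (\<forall>i Ss Ss'. DIface i Ss \<in> set D \<longrightarrow> DIface i Ss' \<in> set D \<longrightarrow> Ss = Ss')"

fun methods :: "decls \<Rightarrow> ty \<Rightarrow> mspec set" where
  "methods D (TS s) = {(m, M). \<exists>x e. DMeth x s m M e \<in> set D}"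
| "methods D (TI i) = {S. \<exists>Ss. DIface i Ss \<in> set D \<and> S \<in> set Ss}"

definition subty :: "decls \<Rightarrow> ty \<Rightarrow> ty \<Rightarrow> bool" where
  "subty D t u \<longleftrightarrow> (\<exists>s. t = TS s \<and> u = TS s) \<or> (\<exists>i. u = TI i \<and> methods D u \<subseteq> methods D t)"

definition methodLookup :: "decls \<Rightarrow> name \<Rightarrow> name \<Rightarrow> decl" where
  "methodLookup D m s = (THE d. d \<in> set D \<and> (\<exists>x M e. d = DMeth x s m M e))"

inductive fval :: "fexp \<Rightarrow> bool" where
  "(\<forall>v \<in> set vs. fval v) \<Longrightarrow> fval (FLit s vs)"

text \<open>Substitution of (closed) values for variables.\<close>
fun fsubst :: "(name \<rightharpoonup> fexp) \<Rightarrow> fexp \<Rightarrow> fexp" where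
  "fsubst \<rho> (FVar x) = (case \<rho> x of Some v \<Rightarrow> v | None \<Rightarrow> FVar x)"
| "fsubst \<rho> (FCall e m es) = FCall (fsubst \<rho> e) m (map (fsubst \<rho>) es)"
| "fsubst \<rho> (FLit s es) = FLit s (map (fsubst \<rho>) es)"
| "fsubst \<rho> (FSel e f) = FSel (fsubst \<rho> e) f"
| "fsubst \<rho> (FAssert e t) = FAssert (fsubst \<rho> e) t"

inductive fstep :: "decls \<Rightarrow> fexp \<Rightarrow> fexp \<Rightarrow> bool" where
  field: "\<lbrakk> \<forall>v \<in> set vs. fval v; DStruct s fs \<in> set D; length vs = length fs;
            i < length fs; fst (fs ! i) = f \<rbrakk>
          \<Longrightarrow> fstep D (FSel (FLit s vs) f) (vs ! i)"
| call: "\<lbrakk> v = FLit s ws; fval v; \<forall>w \<in> set vs. fval w;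
           DMeth x s m (Sig ps t) e \<in> set D; length ps = length vs \<rbrakk>
          \<Longrightarrow> fstep D (FCall v m vs) (fsubst (map_of (zip (x # map fst ps) (v # vs))) e)"
| assert: "\<lbrakk> v = FLit s ws; fval v; subty D (TS s) t \<rbrakk> \<Longrightarrow> fstep D (FAssert v t) v"
| ctx_lit: "\<lbrakk> \<forall>v \<in> set vs. fval v; fstep D e e' \<rbrakk>
          \<Longrightarrow> fstep D (FLit s (vs @ e # es)) (FLit s (vs @ e' # es))"
| ctx_sel: "fstep D e e' \<Longrightarrow> fstep D (FSel e f) (FSel e' f)"
| ctx_assert: "fstep D e e' \<Longrightarrow> fstep D (FAssert e t) (FAssert e' t)"
| ctx_recv: "fstep D e e' \<Longrightarrow> fstep D (FCall e m es) (FCall e' m es)"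
| ctx_arg: "\<lbrakk> fval v; \<forall>w \<in> set vs. fval w; fstep D e e' \<rbrakk>
          \<Longrightarrow> fstep D (FCall v m (vs @ e # es)) (FCall v m (vs @ e' # es))"

definition fsteps_le :: "decls \<Rightarrow> nat \<Rightarrow> fexp \<Rightarrow> fexp \<Rightarrow> bool" where
  "fsteps_le D k e v \<longleftrightarrow> (\<exists>n \<le> k. (fstep D ^^ n) e v) \<and> fval v"

section \<open>Target language (TL)\<close>

datatype tcon = KS name | KI name | KTup nat

datatype tvar = MV name name | LV nat

datatype tl =
    TV tvar
  | TC tcon
  | TAp tl tl
  | TLam tvar tl
  | TCase tl "(tcon \<times> tvar list \<times> tl) list"

definition conapp :: "tcon \<Rightarrow> tl list \<Rightarrow> tl" where
  "conapp K es = foldl TAp (TC K) es"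

definition ttuple :: "tl list \<Rightarrow> tl" where
  "ttuple es = conapp (KTup (length es)) es"

inductive tval :: "tl \<Rightarrow> bool" where
  "tval (TV x)"
| "(\<forall>V \<in> set Vs. tval V) \<Longrightarrow> tval (conapp K Vs)"

fun tsubst :: "(tvar \<rightharpoonup> tl) \<Rightarrow> tl \<Rightarrow> tl" where
  "tsubst \<rho> (TV x) = (case \<rho> x of Some e \<Rightarrow> e | None \<Rightarrow> TV x)"
| "tsubst \<rho> (TC k) = TC k"
| "tsubst \<rho> (TAp a b) = TAp (tsubst \<rho> a) (tsubst \<rho> b)"
| "tsubst \<rho> (TLam x e) = TLam x (tsubst (\<rho>(x := None)) e)"
| "tsubst \<rho> (TCase e cls) =
     TCase (tsubst \<rho> e) (map (\<lambda>(K, xs, b). (K, xs, tsubst (\<rho> |` (- set xs)) b)) cls)"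

definition method_subst :: "(tvar \<rightharpoonup> tl) \<Rightarrow> bool" where
  "method_subst \<sigma> \<longleftrightarrow> finite (dom \<sigma>) \<and> (\<forall>F \<in> ran \<sigma>. \<exists>x b. F = TLam x b)"

inductive tstep :: "(tvar \<rightharpoonup> tl) \<Rightarrow> tl \<Rightarrow> tl \<Rightarrow> bool" where
  beta: "tval V \<Longrightarrow> tstep \<sigma> (TAp (TLam x E) V) (tsubst [x \<mapsto> V] E)"
| casek: "\<lbrakk> \<forall>V \<in> set Vs. tval V; (K, Xs, E') \<in> set cls; length Xs = length Vs \<rbrakk>
          \<Longrightarrow> tstep \<sigma> (TCase (conapp K Vs) cls) (tsubst (map_of (zip Xs Vs)) E')"
| meth: "\<sigma> y = Some F \<Longrightarrow> tstep \<sigma> (TAp (TV y) E) (TAp F E)"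
| ctx_appl: "tstep \<sigma> E E' \<Longrightarrow> tstep \<sigma> (TAp E E2) (TAp E' E2)"
| ctx_appr: "\<lbrakk> tval V; tstep \<sigma> E E' \<rbrakk> \<Longrightarrow> tstep \<sigma> (TAp V E) (TAp V E')"
| ctx_case: "tstep \<sigma> E E' \<Longrightarrow> tstep \<sigma> (TCase E cls) (TCase E' cls)"

definition tsteps_le :: "(tvar \<rightharpoonup> tl) \<Rightarrow> nat \<Rightarrow> tl \<Rightarrow> tl \<Rightarrow> bool" where
  "tsteps_le \<sigma> k E V \<longleftrightarrow> (\<exists>n \<le> k. (tstep \<sigma> ^^ n) E V) \<and> tval V"

section \<open>Interface-value construction and destruction\<close>

text \<open>Variables used in the generated code (nested patterns expanded into nested cases).\<close>
abbreviation "vX \<equiv> LV 0"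
abbreviation "vZ \<equiv> LV 1"
abbreviation "vY \<equiv> LV 2"
abbreviation "vYp \<equiv> LV 3"
definition vXs :: "nat \<Rightarrow> tvar list" where "vXs n = map (\<lambda>i. LV (i + 4)) [0..<n]"

inductive constr :: "decls \<Rightarrow> ty \<Rightarrow> ty \<Rightarrow> tl \<Rightarrow> bool" where
  struct_iface:
  "\<lbrakk> DIface i Ss \<in> set D; set Ss \<subseteq> methods D (TS s) \<rbrakk>
   \<Longrightarrow> constr D (TS s) (TI i)
        (TLam vX (TAp (TC (KI i)) (ttuple (TV vX # map (\<lambda>(m, _). TV (MV m s)) Ss))))"
| iface_iface:
  "\<lbrakk> DIface i Rs \<in> set D; DIface j Ss \<in> set D; length \<pi> = length Ss;
     \<forall>q < length Ss. \<pi> ! q < length Rs \<and> Ss ! q = Rs ! (\<pi> ! q) \<rbrakk>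
   \<Longrightarrow> constr D (TI i) (TI j)
        (TLam vX (TCase (TV vX)
           [(KI i, [vZ], TCase (TV vZ)
              [(KTup (Suc (length Rs)), vY # vXs (length Rs),
                TAp (TC (KI j)) (ttuple (TV vY # map (\<lambda>p. TV (vXs (length Rs) ! p)) \<pi>)))])]))"

inductive destr :: "decls \<Rightarrow> ty \<Rightarrow> ty \<Rightarrow> tl \<Rightarrow> bool" where
  to_struct:
  "\<lbrakk> DIface i Rs \<in> set D; subty D (TS s) (TI i) \<rbrakk>
   \<Longrightarrow> destr D (TI i) (TS s)
        (TLam vX (TCase (TV vX)
           [(KI i, [vZ], TCase (TV vZ)
              [(KTup (Suc (length Rs)), vY # vXs (length Rs),
                TCase (TV vY) [(KS s, [vYp], TAp (TC (KS s)) (TV vYp))])])]))"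
| to_iface:
  "\<lbrakk> DIface i Rs \<in> set D;
     map fst sEs = [s. DStruct s fs \<leftarrow> D, \<exists>E. constr D (TS s) (TI j) E];
     \<forall>(s, E) \<in> set sEs. constr D (TS s) (TI j) E \<rbrakk>
   \<Longrightarrow> destr D (TI i) (TI j)
        (TLam vX (TCase (TV vX)
           [(KI i, [vZ], TCase (TV vZ)
              [(KTup (Suc (length Rs)), vY # vXs (length Rs),
                TCase (TV vY)
                  (map (\<lambda>(s, E). (KS s, [vYp], TAp E (TAp (TC (KS s)) (TV vYp)))) sEs))])]))"

section \<open>Step-indexed logical relation\<close>

type_synonym vrel = "nat \<Rightarrow> ty \<Rightarrow> fexp \<Rightarrow> tl \<Rightarrow> bool"

text \<open>(Exp), relative to a value relation R (only used at indices < k).\<close>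
definition exp_rel_with :: "decls \<Rightarrow> (tvar \<rightharpoonup> tl) \<Rightarrow> vrel \<Rightarrow> nat \<Rightarrow> ty \<Rightarrow> fexp \<Rightarrow> tl \<Rightarrow> bool" where
  "exp_rel_with D \<sigma> R k t e E \<longleftrightarrow>
     (\<forall>k1 k2 v V. k1 < k \<longrightarrow> k2 < k \<longrightarrow> k - k1 - k2 > 0 \<longrightarrow>
        fsteps_le D k1 e v \<longrightarrow> tsteps_le \<sigma> k2 E V \<longrightarrow> R (k - k1 - k2) t v V)"

text \<open>(Method), relative to R (only used at indices <= k).\<close>
definition meth_rel_with :: "decls \<Rightarrow> (tvar \<rightharpoonup> tl) \<Rightarrow> vrel \<Rightarrow> nat \<Rightarrow> mspec \<Rightarrow> decl \<Rightarrow> tl \<Rightarrow> bool" where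
  "meth_rel_with D \<sigma> R k S d V \<longleftrightarrow>
     (\<exists>x s m ps t e. S = (m, Sig ps t) \<and> d = DMeth x s m (Sig ps t) e \<and>
        (\<forall>k' \<le> k. \<forall>v' V' vs Vs. length vs = length ps \<longrightarrow> length Vs = length ps \<longrightarrow>
           R k' (TS s) v' V' \<longrightarrow> (\<forall>i < length ps. R k' (snd (ps ! i)) (vs ! i) (Vs ! i)) \<longrightarrow>
           exp_rel_with D \<sigma> R k' t (fsubst (map_of (zip (x # map fst ps) (v' # vs))) e)
                                  (TAp (TAp V V') (ttuple Vs))))"

text \<open>(Struct) and (Iface) at level k, given the relation R at lower levels.\<close>
inductive val_lvl :: "decls \<Rightarrow> (tvar \<rightharpoonup> tl) \<Rightarrow> vrel \<Rightarrow> nat \<Rightarrow> ty \<Rightarrow> fexp \<Rightarrow> tl \<Rightarrow> bool"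
  for D \<sigma> R k where
  Struct: "\<lbrakk> DStruct s fs \<in> set D; length vs = length fs; length Vs = length fs;
             \<forall>i < length fs. val_lvl D \<sigma> R k (snd (fs ! i)) (vs ! i) (Vs ! i) \<rbrakk>
           \<Longrightarrow> val_lvl D \<sigma> R k (TS s) (FLit s vs) (TAp (TC (KS s)) (ttuple Vs))"
| Iface: "\<lbrakk> V = TAp (TC (KS u)) W;
            \<forall>k1 < k. R k1 (TS u) v V;
            DIface i Ss \<in> set D; length Vs = length Ss;
            \<forall>k2 < k. \<forall>j < length Ss.
               meth_rel_with D \<sigma> R k2 (Ss ! j) (methodLookup D (fst (Ss ! j)) u) (Vs ! j) \<rbrakk>
           \<Longrightarrow> val_lvl D \<sigma> R k (TI i) v (TAp (TC (KI i)) (ttuple (V # Vs)))"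

function val_rel :: "decls \<Rightarrow> (tvar \<rightharpoonup> tl) \<Rightarrow> nat \<Rightarrow> ty \<Rightarrow> fexp \<Rightarrow> tl \<Rightarrow> bool" where
  "val_rel D \<sigma> k = val_lvl D \<sigma> (\<lambda>j. if j < k then val_rel D \<sigma> j else (\<lambda>_ _ _. False)) k"
  by auto
termination by (relation "measure (\<lambda>(D, \<sigma>, k). k)") auto

definition exp_rel :: "decls \<Rightarrow> (tvar \<rightharpoonup> tl) \<Rightarrow> nat \<Rightarrow> ty \<Rightarrow> fexp \<Rightarrow> tl \<Rightarrow> bool" where
  "exp_rel D \<sigma> k t e E = exp_rel_with D \<sigma> (val_rel D \<sigma>) k t e E"

definition meth_rel :: "decls \<Rightarrow> (tvar \<rightharpoonup> tl) \<Rightarrow> nat \<Rightarrow> mspec \<Rightarrow> decl \<Rightarrow> tl \<Rightarrow> bool" where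
  "meth_rel D \<sigma> k S d V = meth_rel_with D \<sigma> (val_rel D \<sigma>) k S d V"

definition decls_rel :: "decls \<Rightarrow> (tvar \<rightharpoonup> tl) \<Rightarrow> nat \<Rightarrow> bool" where
  "decls_rel D \<sigma> k \<longleftrightarrow>
     (\<forall>x s m M e. DMeth x s m M e \<in> set D \<longrightarrow>
        meth_rel D \<sigma> k (m, M) (DMeth x s m M e) (TV (MV m s)))"

end

theory Submission
  imports Defs
begin

fun hd_tl :: "tl \<Rightarrow> tl" where
  "hd_tl (TAp a b) = hd_tl a"
| "hd_tl x = x"

lemma conapp_Nil[simp]: "conapp K [] = TC K"
  by (simp add: conapp_def)

lemma conapp_snoc[simp]: "conapp K (xs @ [y]) = TAp (conapp K xs) y"
  by (simp add: conapp_def)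

lemma hd_conapp[simp]: "hd_tl (conapp K xs) = TC K"
  by (induction xs rule: rev_induct) auto

lemma conapp_inj: "conapp K xs = conapp K' ys \<Longrightarrow> K = K' \<and> xs = ys"
proof (induction xs arbitrary: ys rule: rev_induct)
  case Nil
  then show ?case by (cases ys rule: rev_exhaust) auto
next
  case (snoc x xs)
  then show ?case by (cases ys rule: rev_exhaust) auto
qed

lemma conapp_single: "TAp (TC K) x = conapp K [x]"
  by (simp add: conapp_def)

lemma conapp_TAp: "conapp K xs = TAp a b \<Longrightarrow> \<exists>ys. xs = ys @ [b] \<and> a = conapp K ys"
  by (cases xs rule: rev_exhaust) auto

lemma tval_cases: "tval x \<Longrightarrow> (\<exists>y. x = TV y) \<or> (\<exists>K Vs. x = conapp K Vs \<and> (\<forall>V\<in>set Vs. tval V))"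
  by (induction rule: tval.induct) blast+

lemma tval_hd: "tval x \<Longrightarrow> (\<exists>y. x = TV y) \<or> (\<exists>K. hd_tl x = TC K)"
  using tval_cases by fastforce

lemma tval_TAp: "tval (TAp a b) \<Longrightarrow> tval a \<and> tval b"
proof -
  assume "tval (TAp a b)"
  then obtain K Vs where "TAp a b = conapp K Vs" "\<forall>V\<in>set Vs. tval V"
    using tval_cases by blast
  then show ?thesis using conapp_TAp[of K Vs a b] tval.intros(2)[of _ K] by force
qed

lemma tval_conapp_iff: "tval (conapp K Vs) \<longleftrightarrow> (\<forall>V\<in>set Vs. tval V)"
proof
  assume "tval (conapp K Vs)"
  then show "\<forall>V\<in>set Vs. tval V"
    by (induction Vs rule: rev_induct) (auto dest: tval_TAp)
qed (rule tval.intros(2))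

lemma tval_TLam: "\<not> tval (TLam x b)" using tval_hd by fastforce
lemma tval_TCase: "\<not> tval (TCase x b)" using tval_hd by fastforce
lemma tval_TAp_Lam: "\<not> tval (TAp (TLam x b) c)" using tval_hd[of "TAp (TLam x b) c"] by auto
lemma tval_TAp_TV: "\<not> tval (TAp (TV x) c)" using tval_hd[of "TAp (TV x) c"] by auto

lemma tval_not_step: "tstep \<sigma> a b \<Longrightarrow> tval a \<Longrightarrow> False"
  by (induction rule: tstep.induct)
     (auto simp: tval_TCase tval_TAp_Lam tval_TAp_TV dest: tval_TAp)

lemma tstep_lam: "tstep \<sigma> (TAp (TLam x B) E) Y \<Longrightarrow> tval E \<and> Y = tsubst [x \<mapsto> E] B"
  by (erule tstep.cases) (auto simp: tval_TLam elim: tstep.cases)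

lemma tstep_case: "tstep \<sigma> (TCase E cls) Y \<Longrightarrow> tval E \<Longrightarrow>
   \<exists>K Vs Xs E'. E = conapp K Vs \<and> (\<forall>V \<in> set Vs. tval V) \<and> (K, Xs, E') \<in> set cls
      \<and> length Xs = length Vs \<and> Y = tsubst (map_of (zip Xs Vs)) E'"
  by (erule tstep.cases) (auto dest: tval_not_step)

lemma run_step: "(tstep \<sigma> ^^ n) X V \<Longrightarrow> tval V \<Longrightarrow> \<not> tval X \<Longrightarrow>
  \<exists>X' m. n = Suc m \<and> tstep \<sigma> X X' \<and> (tstep \<sigma> ^^ m) X' V"
  by (cases n) (auto elim!: relpowp_Suc_E2 simp del: relpowp.simps(2))

lemma run_val: "(tstep \<sigma> ^^ n) X V \<Longrightarrow> tval X \<Longrightarrow> V = X"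
  by (cases n) (auto elim!: relpowp_Suc_E2 dest: tval_not_step simp del: relpowp.simps(2))

lemma fval_FLit: "fval (FLit s vs) \<Longrightarrow> \<forall>v\<in>set vs. fval v"
  by (erule fval.cases) auto

lemma fval_not_step: "fstep D a b \<Longrightarrow> fval a \<Longrightarrow> False"
  by (induction rule: fstep.induct) (auto dest: fval_FLit elim: fval.cases)

lemma frun_val: "(fstep D ^^ n) X V \<Longrightarrow> fval X \<Longrightarrow> V = X \<and> n = 0"
  by (cases n) (auto elim!: relpowp_Suc_E2 dest: fval_not_step simp del: relpowp.simps(2))

lemma fassert_run: "(fstep D ^^ n) (FAssert e u) v \<Longrightarrow> fval v \<Longrightarrow>
   \<exists>n' < n. (fstep D ^^ n') e v"
proof (induction n arbitrary: e)
  case 0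
  then show ?case by (auto elim: fval.cases)
next
  case (Suc n)
  then obtain b where b: "fstep D (FAssert e u) b" "(fstep D ^^ n) b v"
    using relpowp_Suc_D2[of n "fstep D" "FAssert e u" v] by blast
  from b(1) show ?case
  proof cases
    case (assert s ws)
    then show ?thesis using b(2) frun_val by fastforce
  next
    case ctx_assert
    then obtain e' where ctx_assert: "b = FAssert e' u" "fstep D e e'" by auto
    then obtain n' where "n' < n" "(fstep D ^^ n') e' v" using Suc b(2) by blast
    moreover have "(fstep D ^^ Suc n') e v"
      using ctx_assert(2) relpowp_Suc_I2[of "fstep D" e "e'" n' v] calculation(2) by blast
    ultimately show ?thesis by (intro exI[of _ "Suc n'"]) simp
  qed
qed


fun fv :: "tl \<Rightarrow> tvar set" where
  "fv (TV x) = {x}"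
| "fv (TC k) = {}"
| "fv (TAp a b) = fv a \<union> fv b"
| "fv (TLam x e) = fv e - {x}"
| "fv (TCase e cls) = fv e \<union> (\<Union>(K, xs, b) \<in> set cls. fv b - set xs)"

lemma tsubst_id: "(\<forall>x\<in>fv e. \<rho> x = None) \<Longrightarrow> tsubst \<rho> e = e"
proof (induction e arbitrary: \<rho>)
  case (TCase e cls)
  have "map (\<lambda>(K, xs, b). (K, xs, tsubst (\<rho> |` (- set xs)) b)) cls = cls"
  proof (rule map_idI)
    fix c assume c: "c \<in> set cls"
    obtain K xs b where cb: "c = (K, xs, b)" by (cases c) auto
    have "tsubst (\<rho> |` (- set xs)) b = b"
      apply (rule TCase.IH(2)[of c "(xs, b)" b])
      using c cb TCase.prems by (auto simp: restrict_map_def)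
    then show "(\<lambda>(K, xs, b). (K, xs, tsubst (\<rho> |` (- set xs)) b)) c = c" using cb by simp
  qed
  then show ?case using TCase by simp
qed auto

lemma tsubst_conapp: "tsubst \<rho> (conapp K es) = conapp K (map (tsubst \<rho>) es)"
  by (induction es rule: rev_induct) auto

definition isMV :: "tvar \<Rightarrow> bool" where "isMV x \<longleftrightarrow> (\<exists>m s. x = MV m s)"

lemma fv_conapp: "fv (conapp K es) = (\<Union>e\<in>set es. fv e)"
  by (induction es rule: rev_induct) auto

lemma exp_rel_with_cong: "exp_rel_with D \<sigma> R k t e E \<Longrightarrow> (\<forall>j\<le>k. R j = R' j) \<Longrightarrow>
   exp_rel_with D \<sigma> R' k t e E"
  unfolding exp_rel_with_def by (metis diff_le_self le_trans)

lemma meth_rel_with_cong: "meth_rel_with D \<sigma> R k S d V \<Longrightarrow> (\<forall>j\<le>k. R j = R' j) \<Longrightarrow>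
   meth_rel_with D \<sigma> R' k S d V"
  unfolding meth_rel_with_def
proof (elim exE conjE, intro exI conjI allI impI)
  fix x s m ps t e k' v' V' vs Vs
  assume H: "\<forall>k'\<le>k. \<forall>v' V' vs Vs. length vs = length ps \<longrightarrow> length Vs = length ps \<longrightarrow>
           R k' (TS s) v' V' \<longrightarrow> (\<forall>i<length ps. R k' (snd (ps ! i)) (vs ! i) (Vs ! i)) \<longrightarrow>
           exp_rel_with D \<sigma> R k' t (fsubst (map_of (zip (x # map fst ps) (v' # vs))) e)
            (TAp (TAp V V') (ttuple Vs))"
    and eq: "\<forall>j\<le>k. R j = R' j" and k': "k' \<le> k" and l: "length vs = length ps" "length Vs = length ps"
    and r1: "R' k' (TS s) v' V'" and r2: "\<forall>i<length ps. R' k' (snd (ps ! i)) (vs ! i) (Vs ! i)"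
  have "exp_rel_with D \<sigma> R k' t (fsubst (map_of (zip (x # map fst ps) (v' # vs))) e)
            (TAp (TAp V V') (ttuple Vs))"
    using H k' l r1 r2 eq by auto
  then show "exp_rel_with D \<sigma> R' k' t (fsubst (map_of (zip (x # map fst ps) (v' # vs))) e)
            (TAp (TAp V V') (ttuple Vs))"
    using exp_rel_with_cong eq k' by (meson le_trans)
qed auto

lemma meth_rel_with_mono: "meth_rel_with D \<sigma> R k S d V \<Longrightarrow> k' \<le> k \<Longrightarrow> meth_rel_with D \<sigma> R k' S d V"
  unfolding meth_rel_with_def
  apply (elim exE conjE)
  subgoal for x s m ps t e
    apply (rule exI[of _ x], rule exI[of _ s], rule exI[of _ m], rule exI[of _ ps], rule exI[of _ t], rule exI[of _ e])
    by simp
  done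

lemma methodLookup_eq: "wf_decls D \<Longrightarrow> DMeth x s m M e \<in> set D \<Longrightarrow>
   methodLookup D m s = DMeth x s m M e"
proof -
  assume wf: "wf_decls D" and d: "DMeth x s m M e \<in> set D"
  have u: "\<And>x' M' e'. DMeth x' s m M' e' \<in> set D \<Longrightarrow> x = x' \<and> M = M' \<and> e = e'"
  proof -
    fix x' M' e' assume "DMeth x' s m M' e' \<in> set D"
    moreover have "\<forall>x x' s m M M' e e'. DMeth x s m M e \<in> set D \<longrightarrow> DMeth x' s m M' e' \<in> set D
        \<longrightarrow> x = x' \<and> M = M' \<and> e = e'" using wf unfolding wf_decls_def by (elim conjE)
    ultimately show "x = x' \<and> M = M' \<and> e = e'" using d by blast
  qed
  show ?thesis unfolding methodLookup_def
    apply (rule the_equality)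
    using d apply simp
    using u by force
qed


lemma MV_notin_vXs[simp]: "MV m s \<notin> set (vXs r)" "vY \<notin> set (vXs r)" "vZ \<notin> set (vXs r)" "vX \<notin> set (vXs r)"
  by (auto simp: vXs_def)

lemma isMV_simps[simp]: "isMV (MV m s)" "\<not> isMV (LV n)" by (auto simp: isMV_def)

lemma map_of_zip_MV: "isMV x \<Longrightarrow> set xs \<subseteq> set (vY # vXs r) \<Longrightarrow> map_of (zip xs ys) x = None"
proof -
  assume a: "isMV x" "set xs \<subseteq> set (vY # vXs r)"
  then have "x \<notin> set xs" by (auto simp: isMV_def)
  then show ?thesis by (auto simp: map_of_eq_None_iff dest!: set_zip_leftD)
qed

lemma prefix:
  assumes run: "(tstep \<sigma> ^^ n) (TAp (TLam vX (TCase (TV vX) [(KI i, [vZ], TCase (TV vZ)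
      [(KTup (Suc r), vY # vXs r, TCase (TV vY) cls)])])) E2) V"
    and tv: "tval V"
    and cls: "\<forall>(K, xs, b) \<in> set cls. \<forall>x \<in> fv b. x \<in> set xs \<or> isMV x"
  shows "tval E2 \<and> (\<exists>V0 Vs m. E2 = TAp (TC (KI i)) (ttuple (V0 # Vs)) \<and> tval V0
          \<and> (tstep \<sigma> ^^ m) (TCase V0 cls) V)"
proof -
  define C2 where "C2 = TCase (TV vY) cls"
  define C1 where "C1 = TCase (TV vZ) [(KTup (Suc r), vY # vXs r, C2)]"
  have fvC2: "\<forall>x\<in>fv C2. x = vY \<or> isMV x" using cls unfolding C2_def by fastforce
  have fvC1: "\<forall>x\<in>fv C1. x = vZ \<or> isMV x" using fvC2 unfolding C1_def by auto
  from run obtain X1 m1 where s1: "tstep \<sigma> (TAp (TLam vX (TCase (TV vX) [(KI i, [vZ], C1)])) E2) X1"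
      "(tstep \<sigma> ^^ m1) X1 V"
    using run_step[OF _ tv] tval_TAp_Lam unfolding C1_def C2_def by blast
  from tstep_lam[OF s1(1)] have tE2: "tval E2" and X1: "X1 = tsubst [vX \<mapsto> E2] (TCase (TV vX) [(KI i, [vZ], C1)])"
    by auto
  have "tsubst ([vX \<mapsto> E2] |` (- {vZ})) C1 = C1"
    by (rule tsubst_id) (use fvC1 in \<open>auto simp: restrict_map_def isMV_def\<close>)
  then have X1': "X1 = TCase E2 [(KI i, [vZ], C1)]" using X1 by simp
  from s1(2) obtain X2 m2 where s2: "tstep \<sigma> X1 X2" "(tstep \<sigma> ^^ m2) X2 V"
    using run_step[OF _ tv] tval_TCase X1' by blast
  from tstep_case[OF s2(1)[unfolded X1'] tE2] obtain K Vs' Xs E' where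
    c2: "E2 = conapp K Vs'" "\<forall>V\<in>set Vs'. tval V" "(K, Xs, E') \<in> set [(KI i, [vZ], C1)]"
      "length Xs = length Vs'" "X2 = tsubst (map_of (zip Xs Vs')) E'"
    by blast
  from c2(3) have c2': "K = KI i" "Xs = [vZ]" "E' = C1" by auto
  with c2(4) obtain Z where "Vs' = [Z]" by (cases Vs') auto
  with c2 c2' have E2: "E2 = conapp (KI i) [Z]" and tZ: "tval Z" and X2: "X2 = tsubst [vZ \<mapsto> Z] C1"
    by auto
  have idC2: "tsubst ([vZ \<mapsto> Z] |` (- set (vY # vXs r))) C2 = C2"
    by (rule tsubst_id) (use fvC2 in \<open>auto simp: restrict_map_def isMV_def\<close>)
  have "X2 = TCase Z [(KTup (Suc r), vY # vXs r, tsubst ([vZ \<mapsto> Z] |` (- set (vY # vXs r))) C2)]"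
    unfolding X2 C1_def by simp
  then have X2': "X2 = TCase Z [(KTup (Suc r), vY # vXs r, C2)]" unfolding idC2 .
  from s2(2) obtain X3 m3 where s3: "tstep \<sigma> X2 X3" "(tstep \<sigma> ^^ m3) X3 V"
    using run_step[OF _ tv] tval_TCase X2' by blast
  from tstep_case[OF s3(1)[unfolded X2'] tZ] obtain K Vs' Xs E' where
    c3: "Z = conapp K Vs'" "\<forall>V\<in>set Vs'. tval V" "(K, Xs, E') \<in> set [(KTup (Suc r), vY # vXs r, C2)]"
      "length Xs = length Vs'" "X3 = tsubst (map_of (zip Xs Vs')) E'"
    by blast
  from c3(3) have c3': "K = KTup (Suc r)" "Xs = vY # vXs r" "E' = C2" by auto
  with c3(4) obtain V0 Vs where V0: "Vs' = V0 # Vs" and lVs: "length Vs = r"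
    by (cases Vs') (auto simp: vXs_def)
  with c3 c3' have Z: "Z = conapp (KTup (Suc r)) (V0 # Vs)" and tV0: "tval V0"
    and X3: "X3 = tsubst (map_of (zip (vY # vXs r) (V0 # Vs))) C2"
    by auto
  have "map (\<lambda>(K, xs, b). (K, xs, tsubst (map_of (zip (vY # vXs r) (V0 # Vs)) |` (- set xs)) b)) cls = cls"
  proof (rule map_idI)
    fix c assume c: "c \<in> set cls"
    obtain K xs b where cb: "c = (K, xs, b)" by (cases c) auto
    have "tsubst (map_of (zip (vY # vXs r) (V0 # Vs)) |` (- set xs)) b = b"
    proof (rule tsubst_id, rule ballI)
      fix x assume x: "x \<in> fv b"
      have "x \<in> set xs \<or> isMV x" using cls c cb x by blast
      then show "(map_of (zip (vY # vXs r) (V0 # Vs)) |` (- set xs)) x = None"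
      proof
        assume "isMV x"
        then have "map_of (zip (vY # vXs r) (V0 # Vs)) x = None"
          by (rule map_of_zip_MV[where r=r]) auto
        then show ?thesis by (simp add: restrict_map_def)
      qed (simp add: restrict_map_def)
    qed
    then show "(\<lambda>(K, xs, b). (K, xs, tsubst (map_of (zip (vY # vXs r) (V0 # Vs)) |` (- set xs)) b)) c = c"
      using cb by simp
  qed
  then have X3': "X3 = TCase V0 cls" using X3 unfolding C2_def by simp
  have "E2 = TAp (TC (KI i)) (ttuple (V0 # Vs))"
    using E2 Z lVs by (simp add: ttuple_def conapp_single)
  then show ?thesis using tE2 tV0 s3(2) X3' by blast
qed


lemma suf_struct:
  assumes "(tstep \<sigma> ^^ m) (TCase V0 [(KS s, [vYp], TAp (TC (KS s)) (TV vYp))]) V" "tval V" "tval V0"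
    "V0 = TAp (TC (KS u)) W"
  shows "V = V0 \<and> s = u"
proof -
  from assms(1) obtain X m' where s: "tstep \<sigma> (TCase V0 [(KS s, [vYp], TAp (TC (KS s)) (TV vYp))]) X"
    "(tstep \<sigma> ^^ m') X V"
    using run_step[OF _ assms(2)] tval_TCase by blast
  from tstep_case[OF s(1) assms(3)] obtain K Vs Xs E' where
    c: "V0 = conapp K Vs" "(K, Xs, E') \<in> set [(KS s, [vYp], TAp (TC (KS s)) (TV vYp))]"
      "length Xs = length Vs" "X = tsubst (map_of (zip Xs Vs)) E'"
    by blast
  from c(1) assms(4) have "K = KS u" "Vs = [W]" using conapp_inj[of K Vs "KS u" "[W]"]
    by (auto simp: conapp_single)
  with c have "X = V0" "s = u" using assms(4) by auto
  then show ?thesis using run_val s(2) assms(3) by blast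
qed

lemma constr_struct: "constr D (TS s) (TI j) E \<Longrightarrow> \<exists>Ss. DIface j Ss \<in> set D \<and> set Ss \<subseteq> methods D (TS s)
  \<and> E = TLam vX (TAp (TC (KI j)) (ttuple (TV vX # map (\<lambda>(m, _). TV (MV m s)) Ss)))"
  by (erule constr.cases) auto

lemma suf_iface:
  assumes "(tstep \<sigma> ^^ m) (TCase V0 (map (\<lambda>(s, E). (KS s, [vYp], TAp E (TAp (TC (KS s)) (TV vYp)))) sEs)) V"
    "tval V" "tval V0" "V0 = TAp (TC (KS u)) W"
    "\<forall>(s, E) \<in> set sEs. constr D (TS s) (TI j) E"
  shows "\<exists>Ss. DIface j Ss \<in> set D \<and> set Ss \<subseteq> methods D (TS u) \<and>
     V = TAp (TC (KI j)) (ttuple (V0 # map (\<lambda>(m, _). TV (MV m u)) Ss))"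
proof -
  from assms(1) obtain X m' where s: "tstep \<sigma> (TCase V0 (map (\<lambda>(s, E). (KS s, [vYp], TAp E (TAp (TC (KS s)) (TV vYp)))) sEs)) X"
    "(tstep \<sigma> ^^ m') X V"
    using run_step[OF _ assms(2)] tval_TCase by blast
  from tstep_case[OF s(1) assms(3)] obtain K Vs Xs E' where
    c: "V0 = conapp K Vs" "(K, Xs, E') \<in> set (map (\<lambda>(s, E). (KS s, [vYp], TAp E (TAp (TC (KS s)) (TV vYp)))) sEs)"
      "length Xs = length Vs" "X = tsubst (map_of (zip Xs Vs)) E'"
    by blast
  from c(1) assms(4) have KV: "K = KS u" "Vs = [W]" using conapp_inj[of K Vs "KS u" "[W]"]
    by (auto simp: conapp_single)
  from c(2) KV obtain E where sE: "(u, E) \<in> set sEs" "Xs = [vYp]"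
    "E' = TAp E (TAp (TC (KS u)) (TV vYp))" by auto
  from sE(1) assms(5) have "constr D (TS u) (TI j) E" by auto
  from constr_struct[OF this] obtain Ss where Ss: "DIface j Ss \<in> set D" "set Ss \<subseteq> methods D (TS u)"
    "E = TLam vX (TAp (TC (KI j)) (ttuple (TV vX # map (\<lambda>(m, _). TV (MV m u)) Ss)))" by blast
  have fvE: "\<forall>x\<in>fv E. isMV x"
    using Ss(3) by (auto simp: ttuple_def fv_conapp)
  have "tsubst [vYp \<mapsto> W] E = E"
    by (rule tsubst_id) (use fvE in \<open>auto simp: isMV_def\<close>)
  then have X: "X = TAp E V0" using c(4) sE KV assms(4) by simp
  from s(2) obtain X' m'' where s2: "tstep \<sigma> X X'" "(tstep \<sigma> ^^ m'') X' V"
    using run_step[OF _ assms(2)] tval_TAp_Lam X Ss(3) by blast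
  from tstep_lam[OF s2(1)[unfolded X Ss(3)]] have
    "X' = TAp (TC (KI j)) (ttuple (V0 # map (\<lambda>(m, _). TV (MV m u)) Ss))"
    by (auto simp: ttuple_def tsubst_conapp comp_def split_def)
  moreover have "tval X'"
    unfolding calculation conapp_single ttuple_def
    by (rule tval.intros(2)) (auto simp: tval_conapp_iff assms(3) intro: tval.intros)
  ultimately show ?thesis using run_val s2(2) Ss by blast
qed


lemma val_lvl_TI: "val_lvl D \<sigma> R k (TI i) v E \<Longrightarrow> \<exists>u W V0 Vs. E = TAp (TC (KI i)) (ttuple (V0 # Vs)) \<and>
   V0 = TAp (TC (KS u)) W \<and> (\<forall>k1<k. R k1 (TS u) v V0)"
  by (erule val_lvl.cases) auto

lemma val_rel_unf: "val_rel D \<sigma> k t v V = val_lvl D \<sigma> (\<lambda>j. if j < k then val_rel D \<sigma> j else (\<lambda>_ _ _. False)) k t v V"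
  by (subst val_rel.simps) (rule refl)

lemma V0_eq: "TAp (TC K) (ttuple (a # as)) = TAp (TC K) (ttuple (b # bs)) \<Longrightarrow> a = b"
proof -
  assume "TAp (TC K) (ttuple (a # as)) = TAp (TC K) (ttuple (b # bs))"
  then have "conapp (KTup (length (a # as))) (a # as) = conapp (KTup (length (b # bs))) (b # bs)"
    unfolding ttuple_def by simp
  from conapp_inj[OF this] show ?thesis by simp
qed

lemma val_rel_TI: "val_rel D \<sigma> j (TI i) v E \<Longrightarrow> \<exists>u W V0 Vs. E = TAp (TC (KI i)) (ttuple (V0 # Vs)) \<and>
   V0 = TAp (TC (KS u)) W \<and> (\<forall>k1<j. val_rel D \<sigma> k1 (TS u) v V0)"
proof -
  assume "val_rel D \<sigma> j (TI i) v E"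
  then have "val_lvl D \<sigma> (\<lambda>j'. if j' < j then val_rel D \<sigma> j' else (\<lambda>_ _ _. False)) j (TI i) v E"
    by (subst (asm) val_rel_unf)
  from val_lvl_TI[OF this] show ?thesis by auto
qed

theorem lemma3:
  fixes D :: decls and \<sigma> :: "tvar \<rightharpoonup> tl" and t u :: ty and e :: fexp
    and E1 E2 :: tl and k :: nat
  assumes "wf_decls D"
    and "method_subst \<sigma>"
    and "destr D t u E1"
    and "decls_rel D \<sigma> k"
    and "exp_rel D \<sigma> k t e E2"
  shows "exp_rel D \<sigma> k u (FAssert e u) (TAp E1 E2)"
  unfolding exp_rel_def exp_rel_with_def
proof (intro allI impI)
  fix k1 k2 v V
  assume k1: "k1 < k" and k2: "k2 < k" and kk: "0 < k - k1 - k2"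
    and fs: "fsteps_le D k1 (FAssert e u) v" and ts: "tsteps_le \<sigma> k2 (TAp E1 E2) V"
  from fs obtain n1 where n1: "n1 \<le> k1" "(fstep D ^^ n1) (FAssert e u) v" and fv: "fval v"
    unfolding fsteps_le_def by blast
  from fassert_run[OF n1(2) fv] obtain n' where n': "n' < n1" "(fstep D ^^ n') e v" by blast
  from ts obtain n2 where n2: "(tstep \<sigma> ^^ n2) (TAp E1 E2) V" and tV: "tval V"
    unfolding tsteps_le_def by blast
  define j where "j = k - n'"
  define K' where "K' = k - k1 - k2"
  have K'j: "K' < j" using kk n1 n' unfolding K'_def j_def by linarith
  have EH: "tval E2 \<Longrightarrow> val_rel D \<sigma> j t v E2"
  proof -
    assume "tval E2"
    then have a: "tsteps_le \<sigma> 0 E2 E2" unfolding tsteps_le_def by auto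
    have b: "fsteps_le D n' e v" using n' fv unfolding fsteps_le_def by auto
    have c: "n' < k" "0 < k" "0 < k - n' - 0" using n1 n' k1 by linarith+
    have "val_rel D \<sigma> (k - n' - 0) t v E2"
      using assms(5)[unfolded exp_rel_def exp_rel_with_def, rule_format, OF c b a] .
    then show ?thesis unfolding j_def by simp
  qed
  from assms(3) show "val_rel D \<sigma> (k - k1 - k2) u v V"
  proof cases
    case (to_struct i Rs s)
    note pre = prefix[OF n2[unfolded to_struct(3)] tV]
    have "tval E2 \<and> (\<exists>V0 Vs m. E2 = TAp (TC (KI i)) (ttuple (V0 # Vs)) \<and> tval V0
          \<and> (tstep \<sigma> ^^ m) (TCase V0 [(KS s, [vYp], TAp (TC (KS s)) (TV vYp))]) V)"
      by (rule pre) simp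
    then obtain V0 Vs m where tE2: "tval E2" and E2: "E2 = TAp (TC (KI i)) (ttuple (V0 # Vs))"
      and tV0: "tval V0" and r: "(tstep \<sigma> ^^ m) (TCase V0 [(KS s, [vYp], TAp (TC (KS s)) (TV vYp))]) V"
      by blast
    have "val_rel D \<sigma> j (TI i) v E2" using EH[OF tE2] to_struct(1) by simp
    from val_rel_TI[OF this] obtain u' W V0' Vs' where
      h: "E2 = TAp (TC (KI i)) (ttuple (V0' # Vs'))" "V0' = TAp (TC (KS u')) W"
        "\<forall>k1<j. val_rel D \<sigma> k1 (TS u') v V0'" by blast
    have V0': "V0' = V0" using h(1) E2 V0_eq by metis
    from suf_struct[OF r tV tV0 h(2)[unfolded V0']] have "V = V0" "s = u'" by auto
    moreover have "val_rel D \<sigma> K' (TS u') v V0'" using h(3) K'j by blast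
    ultimately show ?thesis using V0' to_struct(2) unfolding K'_def by simp
  next
    case (to_iface i Rs sEs j')
    note pre = prefix[OF n2[unfolded to_iface(3)] tV]
    have clsok: "\<forall>(K, xs, b) \<in> set (map (\<lambda>(s, E). (KS s, [vYp], TAp E (TAp (TC (KS s)) (TV vYp)))) sEs).
        \<forall>x \<in> fv b. x \<in> set xs \<or> isMV x"
    proof -
      have fvE: "\<forall>x\<in>fv E. isMV x" if sE: "(s, E) \<in> set sEs" for s E
      proof -
        have "constr D (TS s) (TI j') E" using to_iface sE by auto
        from constr_struct[OF this] obtain Ss :: "mspec list" where
          "E = TLam vX (TAp (TC (KI j')) (ttuple (TV vX # map (\<lambda>(m, _). TV (MV m s)) Ss)))" by blast
        then show ?thesis by (auto simp: ttuple_def fv_conapp)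
      qed
      show ?thesis by (auto dest!: fvE)
    qed
    from pre[OF clsok] obtain V0 Vs m where tE2: "tval E2" and E2: "E2 = TAp (TC (KI i)) (ttuple (V0 # Vs))"
      and tV0: "tval V0" and r: "(tstep \<sigma> ^^ m) (TCase V0 (map (\<lambda>(s, E). (KS s, [vYp], TAp E (TAp (TC (KS s)) (TV vYp)))) sEs)) V"
      by blast
    have "val_rel D \<sigma> j (TI i) v E2" using EH[OF tE2] to_iface(1) by simp
    from val_rel_TI[OF this] obtain u' W V0' Vs' where
      h: "E2 = TAp (TC (KI i)) (ttuple (V0' # Vs'))" "V0' = TAp (TC (KS u')) W"
        "\<forall>k1<j. val_rel D \<sigma> k1 (TS u') v V0'" by blast
    have V0': "V0' = V0" using h(1) E2 V0_eq by metis
    have cs: "\<forall>(s, E) \<in> set sEs. constr D (TS s) (TI j') E" using to_iface(6) .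
    from suf_iface[OF r tV tV0 h(2)[unfolded V0'] cs] obtain Ss where
      Ss: "DIface j' Ss \<in> set D" "set Ss \<subseteq> methods D (TS u')"
        "V = TAp (TC (KI j')) (ttuple (V0 # map (\<lambda>(m, _). TV (MV m u')) Ss))" by blast
    define R' where "R' = (\<lambda>j. if j < K' then val_rel D \<sigma> j else (\<lambda>_ _ _. False))"
    have "val_lvl D \<sigma> R' K' (TI j') v V"
      unfolding Ss(3)
    proof (rule val_lvl.Iface[OF h(2)[unfolded V0'] _ Ss(1)])
      show "\<forall>k1<K'. R' k1 (TS u') v V0" using h(3) K'j V0' unfolding R'_def by auto
      show "length (map (\<lambda>(m, _). TV (MV m u')) Ss) = length Ss" by simp
      show "\<forall>k2<K'. \<forall>q<length Ss. meth_rel_with D \<sigma> R' k2 (Ss ! q) (methodLookup D (fst (Ss ! q)) u')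
              (map (\<lambda>(m, _). TV (MV m u')) Ss ! q)"
      proof (intro allI impI)
        fix k2' q assume k2': "k2' < K'" and q: "q < length Ss"
        obtain mm M where mM: "Ss ! q = (mm, M)" by (cases "Ss ! q") auto
        have "(mm, M) \<in> methods D (TS u')" using Ss(2) nth_mem[OF q] unfolding mM by blast
        then obtain x ee where d: "DMeth x u' mm M ee \<in> set D" by auto
        have ml: "methodLookup D mm u' = DMeth x u' mm M ee" by (rule methodLookup_eq[OF assms(1) d])
        have "meth_rel D \<sigma> k (mm, M) (DMeth x u' mm M ee) (TV (MV mm u'))"
          using assms(4) d unfolding decls_rel_def by blast
        then have "meth_rel_with D \<sigma> (val_rel D \<sigma>) k (mm, M) (DMeth x u' mm M ee) (TV (MV mm u'))"
          unfolding meth_rel_def .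
        then have "meth_rel_with D \<sigma> (val_rel D \<sigma>) k2' (mm, M) (DMeth x u' mm M ee) (TV (MV mm u'))"
          by (rule meth_rel_with_mono) (use k2' K'j j_def in linarith)
        then have "meth_rel_with D \<sigma> R' k2' (mm, M) (DMeth x u' mm M ee) (TV (MV mm u'))"
          by (rule meth_rel_with_cong) (use k2' in \<open>auto simp: R'_def\<close>)
        moreover have "map (\<lambda>(m, _). TV (MV m u')) Ss ! q = TV (MV mm u')" using q mM by simp
        ultimately show "meth_rel_with D \<sigma> R' k2' (Ss ! q) (methodLookup D (fst (Ss ! q)) u')
              (map (\<lambda>(m, _). TV (MV m u')) Ss ! q)"
          using mM ml by simp
      qed
    qed
    then have "val_rel D \<sigma> K' (TI j') v V" unfolding R'_def by (subst val_rel_unf)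
    then show ?thesis using to_iface(2) unfolding K'_def by simp
  qed
qed

end
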